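(* Let $p$ be a prime, $k$ a field of characteristic $p$, and $\gamma\in k$ a root of unity of order $q$. Then every power series $g(\zeta)=\gamma\zeta+\cdots\in k[[\zeta]]$ is conjugated to a power series of the form $\hat g(\zeta)=\gamma\zeta\left(1+\sum_{j=1}^{\infty}a_j\zeta^{jq}\right)$. Moreover, $a_1\ne0$ if and only if $i_0(g^q)=q$, and in this case the quotient $a_2/a_1^2$ depends only on $g$ (not on the choice of such $\hat g$).
   Context: Two power series $g,\hat g\in k[[\zeta]]$ with zero constant term and nonzero linear coefficient are conjugated if there is such a power series $h$ with $\hat g=h\circ g\circ h^{-1}$. $\mathrm{ord}$ is the lowest degree of a nonzero term; $i_0(h)=\mathrm{ord}\big((h(\zeta)-\zeta)/\zeta\big)$ for $h(\zeta)=\zeta+\cdots$, and $g^q$ is the $q$-th compositional iterate. *)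

theory Defs
  imports "HOL-Computational_Algebra.Formal_Power_Series" "HOL-Library.Extended_Nat"
begin

definition admissible :: "'a::field fps \<Rightarrow> bool" where
  "admissible g \<longleftrightarrow> fps_nth g 0 = 0 \<and> fps_nth g 1 \<noteq> 0"

definition conjugated :: "'a::field fps \<Rightarrow> 'a fps \<Rightarrow> bool" where
  "conjugated g ghat \<longleftrightarrow> (\<exists>h. admissible h \<and> ghat = h oo g oo fps_inv h)"

primrec fps_iter :: "'a::field fps \<Rightarrow> nat \<Rightarrow> 'a fps" where
  "fps_iter g 0 = fps_X"
| "fps_iter g (Suc n) = g oo fps_iter g n"

definition i0 :: "'a::field fps \<Rightarrow> enat" where
  "i0 h = (if h = fps_X then \<infinity> else enat (subdegree (fps_shift 1 (h - fps_X))))"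

definition normal_form :: "'a::field \<Rightarrow> nat \<Rightarrow> (nat \<Rightarrow> 'a) \<Rightarrow> 'a fps" where
  "normal_form \<gamma> q a = fps_const \<gamma> * fps_X *
     (1 + Abs_fps (\<lambda>n. if n > 0 \<and> q dvd n then a (n div q) else 0))"

end

theory Submission
  imports Defs
begin
unbundle fps_syntax

definition cg :: "nat \<Rightarrow> 'a::field fps \<Rightarrow> 'a fps \<Rightarrow> bool" where
  "cg N f g \<longleftrightarrow> (\<forall>i<N. f $ i = g $ i)"

lemma cg_refl[simp]: "cg N f f" by (simp add: cg_def)
lemma cg_sym: "cg N f g \<Longrightarrow> cg N g f" by (simp add: cg_def)
lemma cg_trans[trans]: "cg N f g \<Longrightarrow> cg N g h \<Longrightarrow> cg N f h" by (simp add: cg_def)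
lemma cg_mono: "cg N f g \<Longrightarrow> M \<le> N \<Longrightarrow> cg M f g" by (simp add: cg_def)
lemma cg_add: "cg N f f' \<Longrightarrow> cg N g g' \<Longrightarrow> cg N (f+g) (f'+g')" by (simp add: cg_def)
lemma cg_diff: "cg N f f' \<Longrightarrow> cg N g g' \<Longrightarrow> cg N (f-g) (f'-g')" by (simp add: cg_def)
lemma cg_mult: "cg N f f' \<Longrightarrow> cg N g g' \<Longrightarrow> cg N (f*g) (f'*g')"
  unfolding cg_def fps_mult_nth by (auto intro!: sum.cong)
lemma cg_power: "cg N f f' \<Longrightarrow> cg N (f^m) (f'^m)"
  by (induction m) (auto intro: cg_mult)

lemma X_power_dvd_iff: "(fps_X^N dvd (f::'a::field fps)) \<longleftrightarrow> (\<forall>i<N. f $ i = 0)"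
proof
  assume "fps_X^N dvd f" then obtain k where "f = fps_X^N * k" by (auto elim: dvdE)
  then show "\<forall>i<N. f $ i = 0" by (simp add: fps_X_power_mult_nth)
next
  assume h: "\<forall>i<N. f $ i = 0"
  have "f = fps_X^N * fps_shift N f"
    by (rule fps_ext) (use h in \<open>simp add: fps_X_power_mult_nth\<close>)
  then show "fps_X^N dvd f" by (metis dvd_triv_left)
qed

lemma cg_dvd: "cg N f g \<longleftrightarrow> fps_X^N dvd (f - g)"
  by (simp add: cg_def X_power_dvd_iff)

lemma cg_compose_right: "cg N f f' \<Longrightarrow> cg N (f oo g) (f' oo g)"
  unfolding cg_def fps_compose_nth by (auto intro!: sum.cong)

lemma cg_compose_left: "cg N g g' \<Longrightarrow> cg N (f oo g) (f oo g')"
proof -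
  assume a: "cg N g g'"
  have "cg N (g^i) (g'^i)" for i using cg_power[OF a] .
  then show ?thesis unfolding cg_def fps_compose_nth by (auto intro!: sum.cong)
qed

lemma cg_X_mult: "cg N f g \<Longrightarrow> cg (N+k) (fps_X^k*f) (fps_X^k*g)"
  by (simp add: cg_def fps_X_power_mult_nth)

lemma dvd_X_power_mult: "fps_X^m dvd (a::'a::field fps) \<Longrightarrow> fps_X^n dvd b \<Longrightarrow> fps_X^(m+n) dvd a*b"
  by (simp add: mult_dvd_mono power_add)

lemma compose_nth_1: "g $ 0 = 0 \<Longrightarrow> ((f::'a::field fps) oo g) $ 1 = f $ 1 * g $ 1"
  by (simp add: fps_compose_nth)

lemma powK: "fps_X^k dvd (A::'a::field fps) \<Longrightarrow> k \<ge> 1 \<Longrightarrow>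
   cg (k+1) ((fps_X + A)^i) (fps_X^i + (if i = 1 then A else 0))"
proof (induction i)
  case 0 then show ?case by simp
next
  case (Suc i)
  show ?case
  proof (cases "i = 0")
    case True then show ?thesis by simp
  next
    case False
    have "cg (k+1) ((fps_X + A)^Suc i) ((fps_X + A) * (fps_X^i + (if i = 1 then A else 0)))"
      using cg_mult[OF cg_refl Suc.IH[OF Suc.prems]] by simp
    moreover have "fps_X^(k+1) dvd ((fps_X + A) * (fps_X^i + (if i = 1 then A else 0)) - fps_X^Suc i)"
    proof -
      have e: "(fps_X + A) * (fps_X^i + (if i = 1 then A else 0)) - fps_X^Suc i
          = A * fps_X^i + (if i = 1 then fps_X * A + A*A else 0)"
        by (auto simp: algebra_simps)
      have d1: "fps_X^(k+1) dvd A * fps_X^i"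
      proof -
        have "fps_X^1 dvd (fps_X::'a fps)^i" using False by (simp add: dvd_power)
        then show ?thesis using dvd_X_power_mult[OF Suc.prems(1)] by blast
      qed
      have d2: "fps_X^(k+1) dvd fps_X * A + A*A"
      proof -
        have "fps_X^(1+k) dvd fps_X * A" using dvd_X_power_mult[of 1 fps_X k A] Suc.prems by simp
        moreover have "fps_X^(k+k) dvd A*A" using dvd_X_power_mult[of k A k A] Suc.prems by simp
        then have "fps_X^(k+1) dvd A*A" using Suc.prems(2)
          by (meson dvd_trans le_imp_power_dvd add_le_mono order_refl)
        ultimately show ?thesis by (simp add: add.commute)
      qed
      show ?thesis unfolding e using d1 d2 by auto
    qed
    ultimately have "cg (k+1) ((fps_X + A)^Suc i) (fps_X^Suc i)"
      unfolding cg_dvd[symmetric] by (rule cg_trans)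
    then show ?thesis using False by simp
  qed
qed



lemma lemK:
  assumes "fps_X^k dvd (A::'a::field fps)" "k \<ge> 1"
  shows "cg (k+1) (f oo (fps_X + A)) (f + fps_const (f $ 1) * A)"
  unfolding cg_def
proof (intro allI impI)
  fix n assume n: "n < k+1"
  have A0: "A $ 0 = 0" using assms X_power_dvd_iff[of k A] by auto
  have "(f oo (fps_X + A)) $ n = (\<Sum>i=0..n. f $ i * ((fps_X^i) $ n + (if i = 1 then A $ n else 0)))"
    unfolding fps_compose_nth
    using powK[OF assms] n by (intro sum.cong) (auto simp: cg_def)
  also have "\<dots> = (\<Sum>i=0..n. f $ i * (fps_X^i) $ n) + (\<Sum>i=0..n. f $ i * (if i = 1 then A $ n else 0))"
    by (simp add: distrib_left sum.distrib)
  also have "(\<Sum>i=0..n. f $ i * (fps_X^i) $ n) = f $ n"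
    by (simp add: mult_delta_right)
  also have "(\<Sum>i=0..n. f $ i * (if i = 1 then A $ n else 0)) = f $ 1 * A $ n"
    using A0 by (cases "n = 0") (auto simp: mult_delta_right)
  finally show "(f oo (fps_X + A)) $ n = (f + fps_const (f $ 1) * A) $ n" by simp
qed

definition Tm :: "'a::field \<Rightarrow> nat \<Rightarrow> 'a fps" where
  "Tm c k = fps_X + fps_const c * fps_X^k"

lemma Tm_nth: "Tm c k $ n = (if n = 1 then 1 else 0) + (if n = k then c else 0)"
  by (simp add: Tm_def)

lemma conj_step:
  assumes e: "G' oo Tm c k = Tm c k oo G" and k: "k \<ge> 2" and G0: "G $ 0 = 0" and G'0: "G' $ 0 = 0"
  shows "cg k G' G" "G' $ k = G $ k + c * ((G $ 1)^k - G $ 1)"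
proof -
  have cT: "cg k (Tm c k) fps_X" using k by (simp add: cg_def Tm_nth)
  have "cg k (G' oo Tm c k) (G' oo fps_X)" by (rule cg_compose_left[OF cT])
  then have a: "cg k (G' oo Tm c k) G'" by simp
  have "cg k (Tm c k oo G) (fps_X oo G)" by (rule cg_compose_right[OF cT])
  then have b: "cg k (Tm c k oo G) G" using G0 by simp
  show cgk: "cg k G' G" using a b e by (metis cg_sym cg_trans)
  have TG: "Tm c k oo G = G + fps_const c * G^k"
    unfolding Tm_def fps_compose_add_distrib fps_compose_mult_distrib[OF G0]
    using G0 by (simp add: fps_X_power_compose)
  have "(Tm c k oo G) $ k = G $ k + c * (G $ 1)^k"
    unfolding TG using G0 by (simp add: startsby_zero_power_nth_same)
  moreover have "cg (k+1) (G' oo Tm c k) (G' + fps_const (G' $ 1) * (fps_const c * fps_X^k))"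
    unfolding Tm_def by (rule lemK) (use k in auto)
  then have "(G' oo Tm c k) $ k = G' $ k + G' $ 1 * c"
    by (simp add: cg_def)
  moreover have "G' $ 1 = G $ 1" using cgk k by (simp add: cg_def)
  ultimately show "G' $ k = G $ k + c * ((G $ 1)^k - G $ 1)"
    using e by (simp add: algebra_simps)
qed

lemma fps_inv_X: "fps_inv (fps_X::'a::field fps) = fps_X"
  using fps_inv[of "fps_X::'a fps"] by simp

lemma inv0: "fps_inv (h::'a::field fps) $ 0 = 0"
  by (simp add: fps_inv_def)

lemma conj_comm:
  assumes "(h::'a::field fps) $ 0 = 0" "h $ 1 \<noteq> 0" "g $ 0 = 0"
  shows "(h oo g oo fps_inv h) oo h = h oo g"
proof -
  have "(h oo g oo fps_inv h) oo h = (h oo g) oo (fps_inv h oo h)"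
    using assms by (simp add: fps_compose_assoc inv0)
  also have "\<dots> = h oo g" using fps_inv[OF assms(1,2)] by simp
  finally show ?thesis .
qed

lemma comm_conj:
  assumes "(h::'a::field fps) $ 0 = 0" "h $ 1 \<noteq> 0" "G oo h = h oo g"
  shows "G = h oo g oo fps_inv h"
proof -
  have "G = G oo (h oo fps_inv h)" using fps_inv_right[OF assms(1,2)] by simp
  also have "\<dots> = (G oo h) oo fps_inv h" using assms by (simp add: fps_compose_assoc inv0)
  finally show ?thesis using assms(3) by simp
qed


primrec HS :: "'a::field fps \<Rightarrow> 'a \<Rightarrow> nat \<Rightarrow> nat \<Rightarrow> 'a fps" where
  "HS g \<gamma> q 0 = fps_X"
| "HS g \<gamma> q (Suc n) = Tm (let G = HS g \<gamma> q n oo g oo fps_inv (HS g \<gamma> q n) in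
      if (n+2) mod q = 1 mod q then 0 else G $ (n+2) / (\<gamma> - \<gamma>^(n+2))) (n+2) oo HS g \<gamma> q n"

definition GS :: "'a::field fps \<Rightarrow> 'a \<Rightarrow> nat \<Rightarrow> nat \<Rightarrow> 'a fps" where
  "GS g \<gamma> q n = HS g \<gamma> q n oo g oo fps_inv (HS g \<gamma> q n)"

lemma Tm01: "k \<ge> 2 \<Longrightarrow> Tm c k $ 0 = 0" "k \<ge> 2 \<Longrightarrow> Tm c k $ 1 = 1"
  by (auto simp: Tm_nth)

context
  fixes g :: "'a::field fps" and \<gamma> :: 'a and q :: nat
  assumes g0: "g $ 0 = 0" and g1: "g $ 1 = \<gamma>"
    and nr: "\<And>k. k \<ge> 2 \<Longrightarrow> k mod q \<noteq> 1 mod q \<Longrightarrow> \<gamma>^k \<noteq> \<gamma>"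
begin

abbreviation "cc n \<equiv> (if (n+2) mod q = 1 mod q then 0 else GS g \<gamma> q n $ (n+2) / (\<gamma> - \<gamma>^(n+2)))"

lemma HS_Suc: "HS g \<gamma> q (Suc n) = Tm (cc n) (n+2) oo HS g \<gamma> q n"
  by (simp add: GS_def Let_def)

lemma HS01: "HS g \<gamma> q n $ 0 = 0 \<and> HS g \<gamma> q n $ 1 = 1"
proof (induction n)
  case 0 then show ?case by simp
next
  case (Suc n)
  have "(Tm c (n+2) oo HS g \<gamma> q n) $ 1 = 1 \<and> (Tm c (n+2) oo HS g \<gamma> q n) $ 0 = 0" for c
    using Suc.IH compose_nth_1[of "HS g \<gamma> q n" "Tm c (n+2)"] Tm01[where c=c and k="n+2"] by simp
  then show ?case unfolding HS_Suc by blast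
qed

lemma GS0: "GS g \<gamma> q n $ 0 = 0"
  by (simp add: GS_def HS01)

lemma GS_HS: "GS g \<gamma> q n oo HS g \<gamma> q n = HS g \<gamma> q n oo g"
  unfolding GS_def using HS01[of n] g0 by (intro conj_comm) auto

lemma GS_step: "GS g \<gamma> q (Suc n) oo Tm (cc n) (n+2) = Tm (cc n) (n+2) oo GS g \<gamma> q n"
proof -
  let ?T = "Tm (cc n) (n+2)" and ?H = "HS g \<gamma> q n"
  have T0: "?T $ 0 = 0" by (simp add: Tm_nth)
  have "(GS g \<gamma> q (Suc n) oo ?T) oo ?H = GS g \<gamma> q (Suc n) oo HS g \<gamma> q (Suc n)"
    unfolding HS_Suc using HS01[of n] T0 by (simp add: fps_compose_assoc)
  also have "\<dots> = HS g \<gamma> q (Suc n) oo g" by (rule GS_HS)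
  also have "\<dots> = ?T oo (?H oo g)" unfolding HS_Suc using HS01[of n] g0 T0
    by (simp add: fps_compose_assoc)
  also have "\<dots> = ?T oo (GS g \<gamma> q n oo ?H)" by (simp add: GS_HS)
  also have "\<dots> = (?T oo GS g \<gamma> q n) oo ?H" using HS01[of n] GS0[of n]
    by (simp add: fps_compose_assoc)
  finally show ?thesis using fps_compose_inj_right[of ?H] HS01[of n] by simp
qed

lemma GS_cg: "cg (n+2) (GS g \<gamma> q (Suc n)) (GS g \<gamma> q n)"
  using conj_step(1)[OF GS_step] GS0 by simp

lemma GS_inv: "GS g \<gamma> q n $ 1 = \<gamma> \<and> (\<forall>j. 2 \<le> j \<and> j \<le> n+1 \<and> j mod q \<noteq> 1 mod q \<longrightarrow> GS g \<gamma> q n $ j = 0)"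
proof (induction n)
  case 0
  have "GS g \<gamma> q 0 = g" using g0 by (simp add: GS_def fps_inv_X)
  then show ?case using g1 by auto
next
  case (Suc n)
  have c: "cg (n+2) (GS g \<gamma> q (Suc n)) (GS g \<gamma> q n)" by (rule GS_cg)
  have k: "GS g \<gamma> q (Suc n) $ (n+2) = GS g \<gamma> q n $ (n+2) + cc n * (\<gamma>^(n+2) - \<gamma>)"
    using conj_step(2)[OF GS_step] GS0 Suc.IH by simp
  have 1: "GS g \<gamma> q (Suc n) $ 1 = \<gamma>" using c Suc.IH by (simp add: cg_def)
  have "GS g \<gamma> q (Suc n) $ j = 0" if j: "2 \<le> j" "j \<le> n+2" "j mod q \<noteq> 1 mod q" for j
  proof (cases "j = n+2")
    case True
    have "\<gamma>^(n+2) \<noteq> \<gamma>" using nr[of "n+2"] j True by simp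
    then have "\<gamma> - \<gamma>^(n+2) \<noteq> 0" by simp
    then show ?thesis using k True j by (simp add: field_simps)
  next
    case False
    then show ?thesis using c Suc.IH j by (auto simp: cg_def)
  qed
  then show ?case using 1 by auto
qed

lemma HS_cg: "cg (n+1) (HS g \<gamma> q (Suc n)) (HS g \<gamma> q n)"
proof -
  have "cg (n+1) (Tm (cc n) (n+2)) fps_X" by (simp add: cg_def Tm_nth)
  from cg_compose_right[OF this, of "HS g \<gamma> q n"] show ?thesis
    unfolding HS_Suc using HS01[of n] by simp
qed

lemma HS_stab: "m \<ge> n \<Longrightarrow> cg (n+1) (HS g \<gamma> q m) (HS g \<gamma> q n)"
proof (induction m rule: dec_induct)
  case base then show ?case by simp
next
  case (step m)
  have "cg (n+1) (HS g \<gamma> q (Suc m)) (HS g \<gamma> q m)" using cg_mono[OF HS_cg[of m]] step by simp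
  then show ?case using step cg_trans by blast
qed

lemma GS_stab: "m \<ge> n \<Longrightarrow> cg (n+1) (GS g \<gamma> q m) (GS g \<gamma> q n)"
proof (induction m rule: dec_induct)
  case base then show ?case by simp
next
  case (step m)
  have "cg (n+1) (GS g \<gamma> q (Suc m)) (GS g \<gamma> q m)" using cg_mono[OF GS_cg[of m]] step by simp
  then show ?case using step cg_trans by blast
qed

definition "hlim = Abs_fps (\<lambda>i. HS g \<gamma> q i $ i)"
definition "glim = Abs_fps (\<lambda>i. GS g \<gamma> q i $ i)"

lemma hlim_cg: "cg (n+1) hlim (HS g \<gamma> q n)"
  unfolding cg_def hlim_def
proof (intro allI impI)
  fix i assume "i < n+1"
  then have "cg (i+1) (HS g \<gamma> q n) (HS g \<gamma> q i)" by (intro HS_stab) simp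
  then show "Abs_fps (\<lambda>i. HS g \<gamma> q i $ i) $ i = HS g \<gamma> q n $ i" by (simp add: cg_def)
qed

lemma glim_cg: "cg (n+1) glim (GS g \<gamma> q n)"
  unfolding cg_def glim_def
proof (intro allI impI)
  fix i assume "i < n+1"
  then have "cg (i+1) (GS g \<gamma> q n) (GS g \<gamma> q i)" by (intro GS_stab) simp
  then show "Abs_fps (\<lambda>i. GS g \<gamma> q i $ i) $ i = GS g \<gamma> q n $ i" by (simp add: cg_def)
qed

lemma hlim01: "hlim $ 0 = 0" "hlim $ 1 = 1"
  using HS01[of 0] HS01[of 1] by (auto simp: hlim_def simp del: HS.simps)

lemma glim_comm: "glim oo hlim = hlim oo g"
proof (rule fps_ext)
  fix n
  have "cg (n+1) (glim oo hlim) (GS g \<gamma> q n oo hlim)" by (rule cg_compose_right[OF glim_cg])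
  also have "cg (n+1) (GS g \<gamma> q n oo hlim) (GS g \<gamma> q n oo HS g \<gamma> q n)"
    by (rule cg_compose_left[OF hlim_cg])
  also have "GS g \<gamma> q n oo HS g \<gamma> q n = HS g \<gamma> q n oo g" by (rule GS_HS)
  also have "cg (n+1) (HS g \<gamma> q n oo g) (hlim oo g)"
    by (rule cg_compose_right[OF cg_sym[OF hlim_cg]])
  finally show "(glim oo hlim) $ n = (hlim oo g) $ n" by (simp add: cg_def)
qed

lemma glim_props: "glim $ 0 = 0" "glim $ 1 = \<gamma>"
  "\<And>j. j mod q \<noteq> 1 mod q \<Longrightarrow> glim $ j = 0"
proof -
  show "glim $ 0 = 0" by (simp add: glim_def GS0)
  show "glim $ 1 = \<gamma>" using GS_inv by (simp add: glim_def)
  fix j assume j: "j mod q \<noteq> 1 mod q"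
  show "glim $ j = 0"
  proof (cases "j \<ge> 2")
    case True then show ?thesis using GS_inv[of j] j by (simp add: glim_def)
  next
    case False
    moreover have "j \<noteq> 1" using j by auto
    ultimately have "j = 0" by arith
    then show ?thesis by (simp add: glim_def GS0)
  qed
qed

lemma existence: "\<exists>h G. admissible h \<and> G = h oo g oo fps_inv h \<and> G $ 0 = 0 \<and> G $ 1 = \<gamma>
   \<and> (\<forall>j. j mod q \<noteq> 1 mod q \<longrightarrow> G $ j = 0)"
  using glim_props comm_conj[OF hlim01(1) _ glim_comm] hlim01
  by (auto simp: admissible_def)

end


definition sm :: "nat \<Rightarrow> nat \<Rightarrow> 'a::field fps \<Rightarrow> bool" where
  "sm q r f \<longleftrightarrow> (\<forall>n. n mod q \<noteq> r mod q \<longrightarrow> f $ n = 0)"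

lemma sm_mult: "sm q r f \<Longrightarrow> sm q s g \<Longrightarrow> sm q (r+s) (f*g)"
  unfolding sm_def
proof (intro allI impI)
  fix n assume f: "\<forall>n. n mod q \<noteq> r mod q \<longrightarrow> f $ n = 0" and g: "\<forall>n. n mod q \<noteq> s mod q \<longrightarrow> g $ n = 0"
    and n: "n mod q \<noteq> (r + s) mod q"
  have "f $ i * g $ (n - i) = 0" if i: "i \<in> {0..n}" for i
  proof (cases "i mod q = r mod q \<and> (n - i) mod q = s mod q")
    case True
    then have "(i + (n - i)) mod q = (r + s) mod q" by (intro mod_add_cong) auto
    then show ?thesis using i n by simp
  next
    case False then show ?thesis using f g by auto
  qed
  then show "(f * g) $ n = 0" unfolding fps_mult_nth by (intro sum.neutral) blast
qed

lemma sm_power: "sm q r f \<Longrightarrow> sm q (m*r) (f^m)"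
proof (induction m)
  case 0 then show ?case by (auto simp: sm_def)
next
  case (Suc m) then show ?case using sm_mult[of q r f "m*r" "f^m"] by (simp add: add.commute)
qed

lemma nf_nth: "q > 0 \<Longrightarrow> normal_form \<gamma> q a $ n =
   (if n = 0 then 0 else if n = 1 then \<gamma> else if q dvd (n-1) then \<gamma> * a ((n-1) div q) else 0)"
  unfolding normal_form_def mult.assoc fps_mult_left_const_nth fps_X_mult_nth
  by auto

lemma powlow: "(f::'a::field fps) $ 0 = 0 \<Longrightarrow> cg (k+1) (f^k) (fps_const ((f $ 1)^k) * fps_X^k)"
  unfolding cg_def using startsby_zero_power_prefix[of f k] startsby_zero_power_nth_same[of f k]
  by auto

lemma iter0: "(f::'a::field fps) $ 0 = 0 \<Longrightarrow> fps_iter f m $ 0 = 0"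
  by (induction m) auto

lemma iter_comm:
  assumes "G oo h = h oo (g::'a::field fps)" "h $ 0 = 0" "g $ 0 = 0" "G $ 0 = 0"
  shows "fps_iter G m oo h = h oo fps_iter g m"
proof (induction m)
  case 0 then show ?case using assms by simp
next
  case (Suc m)
  have "fps_iter G (Suc m) oo h = G oo (fps_iter G m oo h)"
    using fps_compose_assoc[of h "fps_iter G m" G] iter0[of G m] assms by simp
  also have "\<dots> = (G oo h) oo fps_iter g m"
    using Suc fps_compose_assoc[of "fps_iter g m" h G] iter0[of g m] assms by simp
  also have "\<dots> = h oo fps_iter g (Suc m)"
    using fps_compose_assoc[of "fps_iter g m" g h] iter0[of g m] assms by simp
  finally show ?case .
qed


locale NF =
  fixes \<gamma> :: "'a::field" and p q :: nat and g :: "'a fps"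
  assumes pp: "prime p" and ch: "CHAR('a) = p"
    and q0: "q > 0" and gq: "\<gamma> ^ q = 1" and gmin: "\<forall>m. 0 < m \<and> m < q \<longrightarrow> \<gamma> ^ m \<noteq> 1"
    and g0: "g $ 0 = 0" and g1: "g $ 1 = \<gamma>"
begin

lemma gam0: "\<gamma> \<noteq> 0"
proof
  assume "\<gamma> = 0" then show False using gq q0 by (simp add: power_0_left)
qed

lemma gpow: "\<gamma>^m = 1 \<Longrightarrow> q dvd m"
proof -
  assume m: "\<gamma>^m = 1"
  have e: "\<gamma>^(q*(m div q) + m mod q) = (\<gamma>^q)^(m div q) * \<gamma>^(m mod q)"
    by (simp only: power_add power_mult)
  have eq: "q*(m div q) + m mod q = m" by simp
  have e2: "\<gamma>^m = (\<gamma>^q)^(m div q) * \<gamma>^(m mod q)" using e by (simp only: eq)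
  have "1 = \<gamma>^(m mod q)" using e2 by (simp only: m gq power_one mult_1_left)
  then have "\<gamma>^(m mod q) = 1" by (rule sym)
  moreover have "m mod q < q" using q0 by simp
  ultimately have "\<not> m mod q > 0" using gmin[rule_format, of "m mod q"] by auto
  then show ?thesis by (simp add: mod_0_imp_dvd)
qed

lemma nr: "k \<ge> 2 \<Longrightarrow> k mod q \<noteq> 1 mod q \<Longrightarrow> \<gamma>^k \<noteq> \<gamma>"
proof
  assume k: "k \<ge> 2" "k mod q \<noteq> 1 mod q" and e: "\<gamma>^k = \<gamma>"
  have "\<gamma>^k = \<gamma> * \<gamma>^(k-1)" using k by (cases k) auto
  then have "\<gamma>^(k-1) = 1" using e gam0 by simp
  then have "q dvd (k - 1)" by (rule gpow)
  then have "k mod q = 1 mod q" using k mod_eq_dvd_iff_nat[of 1 k q] by simp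
  then show False using k by simp
qed

lemma q_nz: "(of_nat q :: 'a) \<noteq> 0"
proof
  assume "(of_nat q :: 'a) = 0"
  then have "p dvd q" using ch of_nat_eq_0_iff_char_dvd by metis
  then obtain r where r: "q = p * r" by auto
  have p2: "p \<ge> 2" using pp prime_ge_2_nat by auto
  have r0: "r > 0" using r q0 by auto
  have rq: "r < q" using r p2 r0 by (simp add: less_le_trans[of r "2*r" "p*r"])
  let ?x = "\<gamma>^r"
  have "?x^p = 1" using r gq by (metis power_mult mult.commute)
  moreover have "(?x - 1 + 1)^p = (?x - 1)^p + 1^p"
    by (rule freshmans_dream) (use pp ch in auto)
  ultimately have "(?x - 1)^p = 0" by simp
  then have "?x = 1" by simp
  then show False using gmin r0 rq by auto
qed

lemma part1: "\<exists>a. conjugated g (normal_form \<gamma> q a)"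
proof -
  obtain h G where h: "admissible h" "G = h oo g oo fps_inv h" and G: "G $ 0 = 0" "G $ 1 = \<gamma>"
    "\<forall>j. j mod q \<noteq> 1 mod q \<longrightarrow> G $ j = 0"
    using existence[of g \<gamma> q] g0 g1 nr by blast
  have "G = normal_form \<gamma> q (\<lambda>j. G $ (j*q+1) / \<gamma>)"
  proof (rule fps_ext)
    fix n
    show "G $ n = normal_form \<gamma> q (\<lambda>j. G $ (j*q+1) / \<gamma>) $ n"
    proof (cases "n \<ge> 2")
      case True
      have iff: "n mod q = 1 mod q \<longleftrightarrow> q dvd (n - 1)" using True mod_eq_dvd_iff_nat[of 1 n q] by simp
      show ?thesis
      proof (cases "q dvd (n-1)")
        case True
        then have "(n - 1) div q * q + 1 = n" using \<open>n \<ge> 2\<close> by simp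
        then show ?thesis using True \<open>n \<ge> 2\<close> gam0 q0 by (simp add: nf_nth)
      next
        case False then show ?thesis using G iff q0 \<open>n \<ge> 2\<close> by (simp add: nf_nth)
      qed
    next
      case False
      then have "n = 0 \<or> n = 1" by auto
      then show ?thesis using G q0 by (auto simp: nf_nth)
    qed
  qed
  then have "conjugated g (normal_form \<gamma> q (\<lambda>j. G $ (j*q+1) / \<gamma>))"
    using h unfolding conjugated_def by auto
  then show ?thesis by blast
qed



lemma dvd_small: "q dvd (k::nat) \<Longrightarrow> 0 < k \<Longrightarrow> k \<le> 2*q \<Longrightarrow> k = q \<or> k = 2*q"
proof -
  assume "q dvd k" "0 < k" "k \<le> 2*q"
  then obtain t where t: "k = q*t" by auto
  then have "t \<ge> 1" using \<open>0 < k\<close> by (cases t) auto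
  moreover have "t \<le> 2" using t \<open>k \<le> 2*q\<close> \<open>0 < k\<close> by (cases "t \<le> 2") (auto simp: mult.commute)
  ultimately have "t = 1 \<or> t = 2" by auto
  then show ?thesis using t by auto
qed

lemma nf_P1: "cg (q+2) (normal_form \<gamma> q a) (fps_const \<gamma> * fps_X + fps_const (\<gamma> * a 1) * fps_X^(q+1))"
  unfolding cg_def
proof (intro allI impI)
  fix n assume n: "n < q+2"
  note q = q0
  show "normal_form \<gamma> q a $ n = (fps_const \<gamma> * fps_X + fps_const (\<gamma> * a 1) * fps_X^(q+1)) $ n"
  proof (cases "n \<ge> 2")
    case True
    show ?thesis
    proof (cases "q dvd (n-1)")
      case True
      then have "n - 1 = q \<or> n - 1 = 2*q" using dvd_small[of "n-1"] \<open>n \<ge> 2\<close> n by auto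
      then have "n - 1 = q" using q n by auto
      then show ?thesis using q True \<open>n \<ge> 2\<close> by (simp add: nf_nth)
    next
      case False
      then have "n \<noteq> q+1" by auto
      then show ?thesis using q False \<open>n \<ge> 2\<close> by (simp add: nf_nth)
    qed
  next
    case False
    then have "n = 0 \<or> n = 1" by auto
    then show ?thesis using q by (auto simp: nf_nth)
  qed
qed

lemma gpow_id: "(\<gamma>^m)^(q+1) = \<gamma>^m"
proof -
  have "(\<gamma>^m)^(q+1) = \<gamma>^(m*(q+1))" by (rule power_mult[symmetric])
  also have "m*(q+1) = q*m + m" by simp
  also have "\<gamma>^(q*m + m) = (\<gamma>^q)^m * \<gamma>^m" by (simp only: power_add power_mult)
  finally show ?thesis using gq by simp
qed

lemma iter_P: "cg (q+2) (fps_iter (normal_form \<gamma> q a) m)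
   (fps_const (\<gamma>^m) * fps_X + fps_const (of_nat m * \<gamma>^m * a 1) * fps_X^(q+1))"
proof (induction m)
  case 0 then show ?case by (simp add: cg_def)
next
  case (Suc m)
  let ?N = "normal_form \<gamma> q a"
  let ?P = "fps_const (\<gamma>^m) * fps_X + fps_const (of_nat m * \<gamma>^m * a 1) * fps_X^(q+1)"
  let ?P1 = "fps_const \<gamma> * fps_X + fps_const (\<gamma> * a 1) * fps_X^(q+1)"
  have P0: "?P $ 0 = 0" by simp
  have P1: "?P $ 1 = \<gamma>^m" using q0 by simp
  have "cg (q+2) (fps_iter ?N (Suc m)) (?N oo ?P)"
    using cg_compose_left[OF Suc.IH] by simp
  also have "cg (q+2) (?N oo ?P) (?P1 oo ?P)" by (rule cg_compose_right[OF nf_P1])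
  also have "?P1 oo ?P = fps_const \<gamma> * ?P + fps_const (\<gamma> * a 1) * ?P^(q+1)"
    unfolding fps_compose_add_distrib fps_compose_mult_distrib[OF P0] fps_X_power_compose[OF P0]
      fps_const_compose fps_X_fps_compose_startby0[OF P0] ..
  also have "cg (q+2) (fps_const \<gamma> * ?P + fps_const (\<gamma> * a 1) * ?P^(q+1))
      (fps_const \<gamma> * ?P + fps_const (\<gamma> * a 1) * (fps_const ((\<gamma>^m)^(q+1)) * fps_X^(q+1)))"
  proof -
    have pl: "cg (q+2) (?P^(q+1)) (fps_const ((\<gamma>^m)^(q+1)) * fps_X^(q+1))"
      using powlow[OF P0, of "q+1", unfolded P1] by (simp only: add.assoc one_add_one)
    show ?thesis by (intro cg_add cg_mult cg_refl pl)
  qed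
  also have "cg (q+2) (fps_const \<gamma> * ?P + fps_const (\<gamma> * a 1) * (fps_const ((\<gamma>^m)^(q+1)) * fps_X^(q+1)))
     (fps_const (\<gamma>^Suc m) * fps_X + fps_const (of_nat (Suc m) * \<gamma>^Suc m * a 1) * fps_X^(q+1))"
    unfolding gpow_id cg_def using q0 by (auto simp: algebra_simps)
  finally show ?case .
qed

lemma part2:
  assumes "conjugated g (normal_form \<gamma> q a)"
  shows "a 1 \<noteq> 0 \<longleftrightarrow> i0 (fps_iter g q) = enat q"
proof -
  let ?N = "normal_form \<gamma> q a"
  obtain h where h: "admissible h" and Nh: "?N = h oo g oo fps_inv h"
    using assms unfolding conjugated_def by blast
  have h0: "h $ 0 = 0" and h1: "h $ 1 \<noteq> 0" using h by (auto simp: admissible_def)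
  have N0: "?N $ 0 = 0" using q0 by (simp add: nf_nth)
  have comm: "?N oo h = h oo g" using conj_comm[OF h0 h1 g0] Nh by simp
  define F where "F = fps_iter g q"
  define e where "e = of_nat q * a 1"
  define c where "c = h $ 1"
  have c0: "c \<noteq> 0" using h1 c_def by simp
  have itc: "fps_iter ?N q oo h = h oo F"
    unfolding F_def by (rule iter_comm[OF comm h0 g0 N0])
  have Gq: "cg (q+2) (fps_iter ?N q) (fps_X + fps_const e * fps_X^(q+1))"
    using iter_P[of a q] gq by (simp add: e_def)
  have F0: "F $ 0 = 0" unfolding F_def by (rule iter0[OF g0])
  have R: "cg (q+2) (h oo F) (h + fps_const e * h^(q+1))"
  proof -
    have "cg (q+2) (fps_iter ?N q oo h) ((fps_X + fps_const e * fps_X^(q+1)) oo h)"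
      by (rule cg_compose_right[OF Gq])
    also have "(fps_X + fps_const e * fps_X^(q+1)) oo h = h + fps_const e * h^(q+1)"
      unfolding fps_compose_add_distrib fps_compose_mult_distrib[OF h0] fps_X_power_compose[OF h0]
        fps_const_compose fps_X_fps_compose_startby0[OF h0] ..
    finally show ?thesis using itc by simp
  qed
  have hp: "(h^(q+1)) $ n = (if n = q+1 then c^(q+1) else 0)" if "n \<le> q+1" for n
    using startsby_zero_power_prefix[OF h0, of "q+1"] startsby_zero_power_nth_same[OF h0, of "q+1"]
      that c_def by (cases "n = q+1") auto
  have key: "1 \<le> n \<longrightarrow> n \<le> q+1 \<longrightarrow> F $ n = (if n = 1 then 1 else if n = q+1 then e * c^q else 0)" for n
  proof (induction n rule: less_induct)
    case (less n)
    show ?case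
    proof (intro impI)
      assume n1: "1 \<le> n" and nq: "n \<le> q+1"
      define A where "A = F - fps_X"
      have Ai: "A $ i = 0" if "i < n" for i
      proof (cases "i = 0")
        case True then show ?thesis using F0 by (simp add: A_def)
      next
        case False
        then have "F $ i = (if i = 1 then 1 else 0)" using less.IH[of i] that nq by auto
        then show ?thesis by (simp add: A_def)
      qed
      have dA: "fps_X^n dvd A" using Ai X_power_dvd_iff by blast
      have FA: "F = fps_X + A" by (simp add: A_def)
      have L: "cg (n+1) (h oo F) (h + fps_const c * A)"
        using lemK[OF dA n1, of h] FA c_def by simp
      have "(h oo F) $ n = (h + fps_const e * h^(q+1)) $ n" using R nq by (simp add: cg_def)
      moreover have "(h oo F) $ n = (h + fps_const c * A) $ n" using L by (simp add: cg_def)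
      ultimately have "c * A $ n = e * (h^(q+1)) $ n" by simp
      then have "c * A $ n = (if n = q+1 then e * c^(q+1) else 0)" using hp[OF nq] by simp
      then have "A $ n = (if n = q+1 then e * c^q else 0)" using c0
        by (cases "n = q+1") (auto simp: field_simps)
      then show "F $ n = (if n = 1 then 1 else if n = q+1 then e * c^q else 0)"
        using q0 by (auto simp: A_def)
    qed
  qed
  define S where "S = fps_shift 1 (F - fps_X)"
  have Si: "S $ i = 0" if "i < q" for i
    using key[of "i+1"] that by (simp add: S_def)
  have Sq: "S $ q = e * c^q" using key[of "q+1"] q0 by (simp add: S_def)
  have SX: "S = 0 \<Longrightarrow> F = fps_X"
  proof -
    assume "S = 0"
    then have "(F - fps_X) $ n = 0" for n using F0 unfolding S_def
      by (cases n) (auto simp: fps_eq_iff)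
    then show "F = fps_X" by (simp add: fps_eq_iff)
  qed
  show ?thesis
  proof
    assume a1: "a 1 \<noteq> 0"
    then have "e * c^q \<noteq> 0" using q_nz c0 by (simp add: e_def)
    then have Sq': "S $ q \<noteq> 0" using Sq by simp
    then have "F \<noteq> fps_X" by (auto simp: S_def)
    moreover have "subdegree S = q" using Sq' Si by (intro subdegreeI) auto
    ultimately show "i0 (fps_iter g q) = enat q" by (simp add: i0_def F_def S_def)
  next
    assume i: "i0 (fps_iter g q) = enat q"
    then have FX: "F \<noteq> fps_X" by (auto simp: i0_def F_def)
    then have "subdegree S = q" using i by (simp add: i0_def F_def S_def)
    moreover have "S \<noteq> 0" using SX FX by blast
    ultimately have "S $ q \<noteq> 0" using nth_subdegree_nonzero by metis
    then show "a 1 \<noteq> 0" using Sq by (auto simp: e_def)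
  qed
qed


end

context NF begin

lemma binom2: "\<exists>R. ((K::'b::comm_ring_1) + D)^(Suc m) = K^(Suc m) + of_nat (Suc m) * K^m * D + D^2 * R"
proof (induction m)
  case 0 then show ?case by (rule exI[of _ 0]) simp
next
  case (Suc m)
  then obtain R where R: "(K + D)^(Suc m) = K^(Suc m) + of_nat (Suc m) * K^m * D + D^2 * R" by blast
  have "(K + D)^(Suc (Suc m)) = (K + D) * (K^(Suc m) + of_nat (Suc m) * K^m * D + D^2 * R)"
    using R by simp
  also have "\<dots> = K^(Suc (Suc m)) + of_nat (Suc (Suc m)) * K^(Suc m) * D
      + D^2 * (K * R + of_nat (Suc m) * K^m + D * R)"
    by (simp add: algebra_simps power2_eq_square)
  finally show ?case by blast
qed

lemma sum_single: "k \<in> A \<Longrightarrow> finite A \<Longrightarrow> (\<And>i. i \<in> A \<Longrightarrow> i \<noteq> k \<Longrightarrow> f i = 0) \<Longrightarrow> sum f A = f k"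
  by (simp add: sum.remove sum.neutral)

definition poly3 :: "'a \<Rightarrow> 'a \<Rightarrow> 'a \<Rightarrow> 'a fps" where
  "poly3 u v w = fps_const u * fps_X + fps_const v * fps_X^(q+1) + fps_const w * fps_X^(2*q+1)"

lemma cXk: "(fps_const (c::'a) * fps_X^k) $ n = (if n = k then c else 0)"
  by simp

lemma poly3_nth: "poly3 u v w $ n = (if n = 1 then u else if n = q+1 then v else if n = 2*q+1 then w else 0)"
  unfolding poly3_def fps_add_nth cXk fps_mult_left_const_nth fps_X_nth using q0 by auto

lemma poly3_0: "poly3 u v w $ 0 = 0" by (simp add: poly3_nth)
lemma poly3_1: "poly3 u v w $ 1 = u" by (simp add: poly3_nth)

lemma poly3_compose: "G $ 0 = 0 \<Longrightarrow> poly3 u v w oo G = fps_const u * G + fps_const v * G^(q+1) + fps_const w * G^(2*q+1)"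
  unfolding poly3_def fps_compose_add_distrib fps_compose_mult_distrib fps_X_power_compose
    fps_const_compose fps_X_fps_compose_startby0 by simp

lemma res_approx: assumes "sm q 1 f" "f $ 0 = 0"
  shows "cg (2*q+2) f (poly3 (f $ 1) (f $ (q+1)) (f $ (2*q+1)))"
  unfolding cg_def poly3_nth
proof (intro allI impI)
  fix n assume n: "n < 2*q+2"
  show "f $ n = (if n = 1 then f $ 1 else if n = q + 1 then f $ (q + 1) else if n = 2 * q + 1 then f $ (2 * q + 1) else 0)"
  proof (cases "n = 0 \<or> n = 1 \<or> n = q+1 \<or> n = 2*q+1")
    case True then show ?thesis using assms(2) by auto
  next
    case False
    have "n mod q \<noteq> 1 mod q"
    proof
      assume m: "n mod q = 1 mod q"
      have "q dvd (n - 1)" using m False mod_eq_dvd_iff_nat[of 1 n q] by auto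
      then have "n - 1 = q \<or> n - 1 = 2*q" using dvd_small[of "n-1"] False n by auto
      then show False using False by auto
    qed
    then show ?thesis using assms(1) False by (auto simp: sm_def)
  qed
qed

lemma pow_hi: "cg (2*q+2) ((poly3 u v w)^(2*q+1)) (fps_const (u^(2*q+1)) * fps_X^(2*q+1))"
  using powlow[OF poly3_0, of "2*q+1" u v w, unfolded poly3_1] by (simp only: add.assoc one_add_one)

lemma pow_mid: "cg (2*q+2) ((poly3 u v w)^(q+1))
   (fps_const (u^(q+1)) * fps_X^(q+1) + fps_const (of_nat (q+1) * u^q * v) * fps_X^(2*q+1))"
proof -
  define K where "K = fps_const u"
  define D where "D = fps_X^q * (fps_const v + fps_const w * fps_X^q)"
  have x1: "fps_X^(q+1) = fps_X * (fps_X::'a fps)^q" by simp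
  have x2: "fps_X^(2*q+1) = fps_X * ((fps_X::'a fps)^q * fps_X^q)" by (simp add: mult_2 power_add)
  have P: "poly3 u v w = fps_X * (K + D)"
    unfolding poly3_def K_def D_def x1 x2 by (simp add: algebra_simps)
  obtain R where R: "(K + D)^(Suc q) = K^(Suc q) + of_nat (Suc q) * K^q * D + D^2 * R"
    using binom2 by blast
  have "(poly3 u v w)^(q+1) = fps_X^(q+1) * (K^(Suc q) + of_nat (Suc q) * K^q * D) + fps_X^(q+1) * (D^2 * R)"
    unfolding P power_mult_distrib using R by (simp add: algebra_simps)
  moreover have "fps_X^(2*q+2) dvd fps_X^(q+1) * (D^2 * R)"
  proof -
    have "D^2 = fps_X^(2*q) * (fps_const v + fps_const w * fps_X^q)^2"
      unfolding D_def power_mult_distrib by (simp only: power_mult[symmetric] mult.commute)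
    then have "fps_X^(2*q) dvd D^2" by simp
    then have "fps_X^(2*q) dvd D^2 * R" by simp
    then have d: "fps_X^(q+1 + 2*q) dvd fps_X^(q+1) * (D^2 * R)"
      by (intro dvd_X_power_mult) auto
    have le: "2*q+2 \<le> q+1+2*q" using q0 by simp
    show ?thesis using dvd_trans[OF le_imp_power_dvd[OF le] d] .
  qed
  ultimately have c1: "cg (2*q+2) ((poly3 u v w)^(q+1)) (fps_X^(q+1) * (K^(Suc q) + of_nat (Suc q) * K^q * D))"
    by (simp add: cg_dvd)
  have c2: "cg (2*q+2) (fps_X^(q+1) * (K^(Suc q) + of_nat (Suc q) * K^q * D))
    (fps_const (u^(q+1)) * fps_X^(q+1) + fps_const (of_nat (q+1) * u^q * v) * fps_X^(2*q+1))"
  proof -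
    have inner: "K^(Suc q) + of_nat (Suc q) * K^q * D = fps_const (u^(q+1))
       + fps_const (of_nat (q+1) * u^q * v) * fps_X^q + fps_const (of_nat (q+1)*u^q*w) * fps_X^(2*q)"
    proof -
      have e1: "of_nat (Suc q) * K^q = fps_const (of_nat (q+1) * u^q)"
        unfolding K_def by (simp add: fps_of_nat[symmetric])
      have e0: "K^(Suc q) = fps_const (u^(q+1))" unfolding K_def by simp
      have e2: "fps_const (of_nat (q+1) * u^q * v) = fps_const (of_nat (q+1) * u^q) * fps_const v" by simp
      have e3: "fps_const (of_nat (q+1) * u^q * w) = fps_const (of_nat (q+1) * u^q) * fps_const w" by simp
      have e4: "fps_X^(2*q) = fps_X^q * (fps_X::'a fps)^q" by (simp add: mult_2 power_add)
      show ?thesis unfolding e0 e1 e2 e3 e4 D_def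
        by (simp add: algebra_simps del: fps_const_mult)
    qed
    show ?thesis unfolding inner cg_def
    proof (intro allI impI)
      fix n assume n: "n < 2*q+2"
      show "(fps_X ^ (q + 1) * (fps_const (u ^ (q + 1)) + fps_const (of_nat (q + 1) * u ^ q * v) * fps_X ^ q +
             fps_const (of_nat (q + 1) * u ^ q * w) * fps_X ^ (2 * q))) $ n =
         (fps_const (u ^ (q + 1)) * fps_X ^ (q + 1) + fps_const (of_nat (q + 1) * u ^ q * v) * fps_X ^ (2 * q + 1)) $ n"
        unfolding fps_X_power_mult_nth fps_add_nth cXk fps_nth_fps_const
        using q0 n by auto
    qed
  qed
  show ?thesis using cg_trans[OF c1 c2] .
qed


lemma powdiff: assumes "fps_X dvd (Hr::'a fps)" "fps_X^n dvd E" "fps_X dvd E"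
  shows "fps_X^(n+i) dvd (Hr + E)^(Suc i) - Hr^(Suc i)"
proof (induction i)
  case 0 then show ?case using assms by simp
next
  case (Suc i)
  have e: "(Hr + E)^(Suc (Suc i)) - Hr^(Suc (Suc i)) = (Hr + E) * ((Hr + E)^(Suc i) - Hr^(Suc i)) + E * Hr^(Suc i)"
    by (simp add: algebra_simps)
  have "fps_X dvd Hr + E" using assms(1,3) by (rule dvd_add)
  then have d1: "fps_X^(1 + (n+i)) dvd (Hr + E) * ((Hr + E)^(Suc i) - Hr^(Suc i))"
    using dvd_X_power_mult[of 1 "Hr + E" "n+i"] Suc.IH by simp
  have "fps_X^(Suc i) dvd Hr^(Suc i)" using dvd_power_same[OF assms(1)] .
  then have d2: "fps_X^(n + Suc i) dvd E * Hr^(Suc i)" using dvd_X_power_mult assms(2) by blast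
  show ?case unfolding e using d1 d2 by (simp add: add.commute add.left_commute)
qed

lemma res_conj:
  assumes HC: "H oo A = B oo H" and H0: "H $ 0 = 0" and sA: "sm q 1 A" and sB: "sm q 1 B"
    and A0: "A $ 0 = 0" and A1: "A $ 1 = \<gamma>" and B0: "B $ 0 = 0" and B1: "B $ 1 = \<gamma>"
  shows "sm q 1 H"
proof -
  have "n mod q \<noteq> 1 mod q \<longrightarrow> H $ n = 0" for n
  proof (induction n rule: less_induct)
    case (less n)
    show ?case
    proof
      assume nr1: "n mod q \<noteq> 1 mod q"
      show "H $ n = 0"
      proof (cases "n \<ge> 2")
        case False
        moreover have "n \<noteq> 1" using nr1 by auto
        ultimately have "n = 0" by arith
        then show ?thesis using H0 by simp
      next
        case True
        define Hr where "Hr = Abs_fps (\<lambda>j. if j mod q = 1 mod q then H $ j else 0)"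
        define E where "E = H - Hr"
        have sHr: "sm q 1 Hr" by (simp add: sm_def Hr_def)
        have Hr0: "Hr $ 0 = 0" using H0 by (simp add: Hr_def)
        have dX: "fps_X dvd Hr" using Hr0 X_power_dvd_iff[of 1 Hr] by simp
        have dE: "fps_X^n dvd E" unfolding X_power_dvd_iff
        proof (intro allI impI)
          fix j assume "j < n"
          then show "E $ j = 0" using less.IH[of j] by (simp add: E_def Hr_def)
        qed
        have dE1: "fps_X dvd E" using dvd_trans[OF le_imp_power_dvd dE, of 1] True by simp
        have HE: "H = Hr + E" by (simp add: E_def)
        have LHS: "(H oo A) $ n = H $ n * \<gamma>^n"
        proof -
          have "(H oo A) $ n = H $ n * (A^n) $ n"
            unfolding fps_compose_nth
          proof (rule sum_single)
            fix i assume i: "i \<in> {0..n}" "i \<noteq> n"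
            show "H $ i * (A^i) $ n = 0"
            proof (cases "i mod q = 1 mod q")
              case True
              have "sm q (i*1) (A^i)" by (rule sm_power[OF sA])
              then have "(A^i) $ n = 0" using True nr1 by (simp add: sm_def)
              then show ?thesis by simp
            next
              case False then show ?thesis using less.IH[of i] i by simp
            qed
          qed auto
          then show ?thesis using startsby_zero_power_nth_same[OF A0, of n] A1 by simp
        qed
        have RHS: "(B oo H) $ n = \<gamma> * H $ n"
        proof -
          have "(B oo H) $ n = B $ 1 * (H^1) $ n"
            unfolding fps_compose_nth
          proof (rule sum_single)
            fix i assume i: "i \<in> {0..n}" "i \<noteq> 1"
            show "B $ i * (H^i) $ n = 0"
            proof (cases "i mod q = 1 mod q \<and> i \<noteq> 0")
              case False
              then have "B $ i = 0" using sB B0 by (auto simp: sm_def)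
              then show ?thesis by simp
            next
              case True
              then have i2: "i \<ge> 2" using i by auto
              define k where "k = i - 2"
              have k: "i = Suc (Suc k)" using i2 by (simp add: k_def)
              have "fps_X^(n + Suc k) dvd (Hr + E)^(Suc (Suc k)) - Hr^(Suc (Suc k))"
                by (rule powdiff[OF dX dE dE1])
              then have "fps_X^(n+1) dvd H^i - Hr^i" unfolding HE k
                by (rule dvd_trans[rotated]) (simp add: le_imp_power_dvd)
              then have "(H^i) $ n = (Hr^i) $ n" unfolding X_power_dvd_iff by auto
              moreover have "sm q (i*1) (Hr^i)" by (rule sm_power[OF sHr])
              then have "(Hr^i) $ n = 0" using True nr1 by (simp add: sm_def)
              ultimately show ?thesis by simp
            qed
          qed (use True in auto)
          then show ?thesis using B1 by simp
        qed
        have "H $ n * \<gamma>^n = \<gamma> * H $ n" by (metis LHS RHS HC)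
        then have "H $ n * (\<gamma>^n - \<gamma>) = 0" by (simp add: algebra_simps)
        moreover have "\<gamma>^n \<noteq> \<gamma>" using nr[OF True nr1] .
        ultimately show ?thesis by simp
      qed
    qed
  qed
  then show ?thesis by (simp add: sm_def)
qed


lemma nf_sm: "sm q 1 (normal_form \<gamma> q a)"
  unfolding sm_def
proof (intro allI impI)
  fix n assume n: "n mod q \<noteq> 1 mod q"
  then have "n \<noteq> 1" by auto
  moreover have "\<not> (n \<ge> 1 \<and> q dvd (n-1))"
  proof
    assume "n \<ge> 1 \<and> q dvd (n-1)"
    then have "n mod q = 1 mod q" using mod_eq_dvd_iff_nat[of 1 n q] by simp
    then show False using n by simp
  qed
  ultimately show "normal_form \<gamma> q a $ n = 0" using q0 by (auto simp: nf_nth)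
qed

lemma nf_vals: "normal_form \<gamma> q a $ 0 = 0" "normal_form \<gamma> q a $ 1 = \<gamma>"
  "normal_form \<gamma> q a $ (q+1) = \<gamma> * a 1" "normal_form \<gamma> q a $ (2*q+1) = \<gamma> * a 2"
  using q0 by (auto simp: nf_nth)

lemma nf_approx: "cg (2*q+2) (normal_form \<gamma> q a) (poly3 \<gamma> (\<gamma> * a 1) (\<gamma> * a 2))"
  using res_approx[OF nf_sm nf_vals(1), of a] unfolding nf_vals .

lemma part3:
  assumes ca: "conjugated g (normal_form \<gamma> q a)" and cb: "conjugated g (normal_form \<gamma> q b)"
    and a1: "a 1 \<noteq> 0" and b1: "b 1 \<noteq> 0"
  shows "a 2 / (a 1)^2 = b 2 / (b 1)^2"
proof -
  let ?Na = "normal_form \<gamma> q a" and ?Nb = "normal_form \<gamma> q b"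
  obtain h1 where h1: "admissible h1" and Na: "?Na = h1 oo g oo fps_inv h1"
    using ca unfolding conjugated_def by blast
  obtain h2 where h2: "admissible h2" and Nb: "?Nb = h2 oo g oo fps_inv h2"
    using cb unfolding conjugated_def by blast
  have h10: "h1 $ 0 = 0" and h11: "h1 $ 1 \<noteq> 0" using h1 by (auto simp: admissible_def)
  have h20: "h2 $ 0 = 0" and h21: "h2 $ 1 \<noteq> 0" using h2 by (auto simp: admissible_def)
  have Na0: "?Na $ 0 = 0" and Nb0: "?Nb $ 0 = 0" by (rule nf_vals)+
  have ca': "?Na oo h1 = h1 oo g" using conj_comm[OF h10 h11 g0] Na by simp
  have cb': "?Nb oo h2 = h2 oo g" using conj_comm[OF h20 h21 g0] Nb by simp
  define H where "H = h2 oo fps_inv h1"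
  have H0: "H $ 0 = 0" by (simp add: H_def h20)
  have "(fps_inv h1 oo h1) $ 1 = 1" using fps_inv[OF h10 h11] by simp
  then have i1: "fps_inv h1 $ 1 * h1 $ 1 = 1" using compose_nth_1[OF h10] by simp
  then have i1': "fps_inv h1 $ 1 \<noteq> 0" by auto
  have H1: "H $ 1 \<noteq> 0" unfolding H_def using compose_nth_1[OF inv0, of h2 h1] h21 i1' by simp
  have Hh1: "H oo h1 = h2"
  proof -
    have "H oo h1 = h2 oo (fps_inv h1 oo h1)"
      unfolding H_def using fps_compose_assoc[OF h10 inv0, of h2] by (rule sym)
    then show ?thesis using fps_inv[OF h10 h11] by simp
  qed
  have HC: "H oo ?Na = ?Nb oo H"
  proof -
    have "(H oo ?Na) oo h1 = H oo (?Na oo h1)"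
      using fps_compose_assoc[of h1 ?Na H] h10 Na0 by simp
    also have "\<dots> = (H oo h1) oo g" unfolding ca'
      using fps_compose_assoc[of g h1 H] h10 g0 by simp
    also have "\<dots> = h2 oo g" by (simp add: Hh1)
    also have "\<dots> = ?Nb oo (H oo h1)" by (simp add: Hh1 cb')
    also have "\<dots> = (?Nb oo H) oo h1" using fps_compose_assoc[of h1 H ?Nb] h10 H0 by simp
    finally show ?thesis using fps_compose_inj_right[OF h10 h11] by blast
  qed
  have sH: "sm q 1 H"
    by (rule res_conj[OF HC H0 nf_sm nf_sm nf_vals(1) nf_vals(2) nf_vals(1) nf_vals(2)])
  define c where "c = H $ 1"
  define d where "d = H $ (q+1)"
  define e where "e = H $ (2*q+1)"
  have c0: "c \<noteq> 0" using H1 c_def by simp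
  have Hap: "cg (2*q+2) H (poly3 c d e)" unfolding c_def d_def e_def by (rule res_approx[OF sH H0])
  let ?Pa = "poly3 \<gamma> (\<gamma> * a 1) (\<gamma> * a 2)" and ?Pb = "poly3 \<gamma> (\<gamma> * b 1) (\<gamma> * b 2)"
  let ?PH = "poly3 c d e"
  let ?L = "fps_const c * ?Pa + fps_const d * (fps_const (\<gamma>^(q+1)) * fps_X^(q+1)
       + fps_const (of_nat (q+1) * \<gamma>^q * (\<gamma> * a 1)) * fps_X^(2*q+1))
       + fps_const e * (fps_const (\<gamma>^(2*q+1)) * fps_X^(2*q+1))"
  let ?R = "fps_const \<gamma> * ?PH + fps_const (\<gamma> * b 1) * (fps_const (c^(q+1)) * fps_X^(q+1)
       + fps_const (of_nat (q+1) * c^q * d) * fps_X^(2*q+1))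
       + fps_const (\<gamma> * b 2) * (fps_const (c^(2*q+1)) * fps_X^(2*q+1))"
  have L: "cg (2*q+2) (H oo ?Na) ?L"
  proof -
    have "cg (2*q+2) (H oo ?Na) (?PH oo ?Na)" by (rule cg_compose_right[OF Hap])
    also have "cg (2*q+2) (?PH oo ?Na) (?PH oo ?Pa)" by (rule cg_compose_left[OF nf_approx])
    also have "?PH oo ?Pa = fps_const c * ?Pa + fps_const d * ?Pa^(q+1) + fps_const e * ?Pa^(2*q+1)"
      by (rule poly3_compose[OF poly3_0])
    also have "cg (2*q+2) \<dots> ?L"
      by (intro cg_add cg_mult cg_refl pow_mid pow_hi)
    finally show ?thesis .
  qed
  have R: "cg (2*q+2) (?Nb oo H) ?R"
  proof -
    have "cg (2*q+2) (?Nb oo H) (?Pb oo H)" by (rule cg_compose_right[OF nf_approx])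
    also have "cg (2*q+2) (?Pb oo H) (?Pb oo ?PH)" by (rule cg_compose_left[OF Hap])
    also have "?Pb oo ?PH = fps_const \<gamma> * ?PH + fps_const (\<gamma> * b 1) * ?PH^(q+1) + fps_const (\<gamma> * b 2) * ?PH^(2*q+1)"
      by (rule poly3_compose[OF poly3_0])
    also have "cg (2*q+2) \<dots> ?R"
      by (intro cg_add cg_mult cg_refl pow_mid pow_hi)
    finally show ?thesis .
  qed
  have "cg (2*q+2) ?L (H oo ?Na)" by (rule cg_sym[OF L])
  then have "cg (2*q+2) ?L (?Nb oo H)" by (simp only: HC)
  from cg_trans[OF this R] have LR: "cg (2*q+2) ?L ?R" .
  have g1': "\<gamma>^(q+1) = \<gamma>" using gq by simp
  have g2': "\<gamma>^(2*q+1) = \<gamma>" using gq by (simp add: power_mult mult.commute[of 2 q])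
  have lt1: "q+1 < 2*q+2" and lt2: "2*q+1 < 2*q+2" by simp_all
  have E1: "?L $ (q+1) = ?R $ (q+1)" using LR lt1 unfolding cg_def by blast
  have E2: "?L $ (2*q+1) = ?R $ (2*q+1)" using LR lt2 unfolding cg_def by blast
  have E1': "c * (\<gamma> * a 1) + d * \<gamma> = \<gamma> * d + \<gamma> * b 1 * c^(q+1)"
    using E1 q0 unfolding g1' by (simp add: poly3_nth)
  have E2': "c * (\<gamma> * a 2) + d * (of_nat (q+1) * (\<gamma> * a 1)) + e * \<gamma>
      = \<gamma> * e + \<gamma> * b 1 * (of_nat (q+1) * c^q * d) + \<gamma> * b 2 * c^(2*q+1)"
    using E2 q0 unfolding g2' gq by (simp add: poly3_nth)
  have A1: "a 1 = b 1 * c^q"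
  proof -
    have "\<gamma> * (c * a 1) = \<gamma> * (c * (b 1 * c^q))" using E1' by (simp add: algebra_simps)
    then show ?thesis using gam0 c0 by simp
  qed
  have A2: "a 2 = b 2 * c^(2*q)"
  proof -
    have "\<gamma> * (c * a 2) = \<gamma> * (c * (b 2 * c^(2*q)))" using E2' unfolding A1 by (simp add: algebra_simps)
    then show ?thesis using gam0 c0 by simp
  qed
  have "c^(2*q) = (c^q)^2" by (simp add: power_mult mult.commute[of 2 q])
  then show ?thesis unfolding A1 A2 using c0 b1 by (simp add: field_simps)
qed

end

theorem proposition4p1:
  fixes \<gamma> :: "'a::field" and p q :: nat and g :: "'a fps"
  assumes "prime p" and "CHAR('a) = p"
    and "q > 0" and "\<gamma> ^ q = 1" and "\<forall>m. 0 < m \<and> m < q \<longrightarrow> \<gamma> ^ m \<noteq> 1"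
    and "fps_nth g 0 = 0" and "fps_nth g 1 = \<gamma>"
  shows "(\<exists>a. conjugated g (normal_form \<gamma> q a))
    \<and> (\<forall>a. conjugated g (normal_form \<gamma> q a) \<longrightarrow> (a 1 \<noteq> 0 \<longleftrightarrow> i0 (fps_iter g q) = enat q))
    \<and> (i0 (fps_iter g q) = enat q \<longrightarrow>
        (\<forall>a b. conjugated g (normal_form \<gamma> q a) \<and> conjugated g (normal_form \<gamma> q b)
           \<longrightarrow> a 2 / (a 1)^2 = b 2 / (b 1)^2))"
proof -
  interpret NF \<gamma> p q g by (rule NF.intro[OF assms])
  have P2: "\<forall>a. conjugated g (normal_form \<gamma> q a) \<longrightarrow> (a 1 \<noteq> 0 \<longleftrightarrow> i0 (fps_iter g q) = enat q)"
    using part2 by blast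
  have P3: "i0 (fps_iter g q) = enat q \<longrightarrow>
        (\<forall>a b. conjugated g (normal_form \<gamma> q a) \<and> conjugated g (normal_form \<gamma> q b)
           \<longrightarrow> a 2 / (a 1)^2 = b 2 / (b 1)^2)"
  proof (intro impI allI)
    fix a b :: "nat \<Rightarrow> 'a"
    assume i: "i0 (fps_iter g q) = enat q"
      and c: "conjugated g (normal_form \<gamma> q a) \<and> conjugated g (normal_form \<gamma> q b)"
    then have "a 1 \<noteq> 0" "b 1 \<noteq> 0" using part2 by blast+
    then show "a 2 / (a 1)^2 = b 2 / (b 1)^2" using part3 c by blast
  qed
  show ?thesis using part1 P2 P3 by blast
qed

end
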